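(* Fix an integer $d\ge7$, an integer $l\ge1$ with $\lambda_l>0$, a constant $\alpha>0$, and constants $\widetilde k\in(0,1)$, $\widetilde\sigma\in(0,\frac12)$. For $s_0>0$ put $\widetilde K=e^{\widetilde k\omega_l s_0}$, where $\omega_l=\lambda_l/\gamma$. For $q=(q_0,\dots,q_{l-1})\in\mathbb R^l$ with $|q|\le e^{-\lambda_l s_0}$, let $\psi_{0,q}$ be any measurable function on $(0,\infty)$ with $$\psi_{0,q}(y)=\begin{cases}U_\alpha(ye^{\omega_l s_0})-\frac{\pi}{2}, & y\in(0,\widetilde K e^{-\omega_l s_0}),\\[2pt] \sum_{n=0}^{l-1}q_n\phi_n(y)-e^{-\lambda_l s_0}\phi_l(y), & y\in[\widetilde K e^{-\omega_l s_0},e^{\widetilde\sigma s_0}),\end{cases}\qquad |\psi_{0,q}(y)|\le\frac{\pi}{2}\ \text{ for } y\ge e^{\widetilde\sigma s_0},$$ and define $\widetilde\phi_l:=e^{\lambda_l s_0}\bigl(\sum_{n=0}^{l-1}q_n\phi_n-\psi_{0,q}\bigr)$. Then there exist $\kappa>0$, $C>0$ and $s_*>0$ (independent of $s_0$, $q$ and of the choice of $\psi_{0,q}$ on $[e^{\widetilde\sigma s_0},\infty)$) such that for all $s_0\ge s_*$, $$\|\widetilde\phi_l-\phi_l\|\le Ce^{-\kappa s_0}\qquad\text{and}\qquad |\langle\widetilde\phi_l,\phi_n\rangle|\le Ce^{-\kappa s_0}\ \text{ for all } n\ne l.$$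
   Context: Let $\omega=\sqrt{d^2-8d+8}$, $\gamma=\frac12(d-2-\omega)$, $\rho(y)=y^{d-1}e^{-y^2/4}$, $\mathcal H=L^2((0,\infty),\rho\,dy)$ with inner product $\langle f,g\rangle=\int_0^\infty fg\rho\,dy$ and norm $\|\cdot\|$. $\lambda_n=-\gamma/2+n$ and $\phi_n(y)=\mathcal N_n y^{-\gamma}L_n^{(\omega/2)}(y^2/4)$ (with $L_n^{(a)}$ the generalized Laguerre polynomial and $\mathcal N_n>0$ chosen so $\|\phi_n\|=1$) are the eigenvalues and orthonormal eigenfunctions of the Friedrichs extension $A$ of $\mathcal A\phi=-\frac1\rho(\rho\phi')'-\frac{d-1}{y^2}\phi$. $U_\alpha$ denotes the solution of $U''+\frac{d-1}{r}U'-\frac{d-1}{2r^2}\sin(2U)=0$ with $U(0)=0$, $U'(0)=\alpha$; one may use (as known) that $U_\alpha(r)=U_1(\alpha r)$, $U_\alpha$ is increasing on $(0,\infty)$, and $U_\alpha(r)=\frac{\pi}{2}-c_\alpha r^{-\gamma}+O(r^{-\gamma-2})$ as $r\to\infty$ for some constant $c_\alpha>0$. *)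

theory Defs
  imports "HOL-Analysis.Analysis" "HOL-Library.Landau_Symbols"
begin

definition omega :: "nat \<Rightarrow> real" where
  "omega d = sqrt (real d ^ 2 - 8 * real d + 8)"

definition gamma :: "nat \<Rightarrow> real" where
  "gamma d = (real d - 2 - omega d) / 2"

definition rho :: "nat \<Rightarrow> real \<Rightarrow> real" where
  "rho d y = y ^ (d - 1) * exp (- (y ^ 2) / 4)"

definition hinner :: "nat \<Rightarrow> (real \<Rightarrow> real) \<Rightarrow> (real \<Rightarrow> real) \<Rightarrow> real" where
  "hinner d f g = (LINT y:{0<..}|lborel. f y * g y * rho d y)"

definition hnorm :: "nat \<Rightarrow> (real \<Rightarrow> real) \<Rightarrow> real" where
  "hnorm d f = sqrt (hinner d f f)"

definition in_H :: "nat \<Rightarrow> (real \<Rightarrow> real) \<Rightarrow> bool" where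
  "in_H d f \<longleftrightarrow> set_borel_measurable lborel {0<..} f \<and>
     (\<integral>\<^sup>+ y. indicator {0<..} y * ennreal ((f y)\<^sup>2 * rho d y) \<partial>lborel) < \<infinity>"

definition genlaguerre :: "nat \<Rightarrow> real \<Rightarrow> real \<Rightarrow> real" where
  "genlaguerre n a x = (\<Sum>k\<le>n. (-1) ^ k * ((real n + a) gchoose (n - k)) * x ^ k / fact k)"

definition lam :: "nat \<Rightarrow> nat \<Rightarrow> real" where
  "lam d n = - gamma d / 2 + real n"

definition phi_raw :: "nat \<Rightarrow> nat \<Rightarrow> real \<Rightarrow> real" where
  "phi_raw d n y = y powr (- gamma d) * genlaguerre n (omega d / 2) (y ^ 2 / 4)"

definition normconst :: "nat \<Rightarrow> nat \<Rightarrow> real" where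
  "normconst d n = 1 / hnorm d (phi_raw d n)"

definition phi :: "nat \<Rightarrow> nat \<Rightarrow> real \<Rightarrow> real" where
  "phi d n y = normconst d n * phi_raw d n y"

definition solves_U :: "nat \<Rightarrow> real \<Rightarrow> (real \<Rightarrow> real) \<Rightarrow> bool" where
  "solves_U d \<alpha> U \<longleftrightarrow>
     U 0 = 0 \<and> (U has_real_derivative \<alpha>) (at 0 within {0..}) \<and>
     (\<forall>r>0. (U has_real_derivative deriv U r) (at r) \<and>
            (deriv U has_real_derivative deriv (deriv U) r) (at r) \<and>
            deriv (deriv U) r + (real d - 1) / r * deriv U r
              - (real d - 1) / (2 * r ^ 2) * sin (2 * U r) = 0)"

end

theory Submission
  imports Defs "HOL-Real_Asymp.Real_Asymp"
begin


lemma nn_SUP_halfline: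
  fixes h :: "real \<Rightarrow> real" and r :: "nat \<Rightarrow> real"
  assumes h: "h \<in> borel_measurable borel" and inc: "incseq r" and lim: "filterlim r at_top sequentially"
  shows "(\<integral>\<^sup>+x. ennreal (h x * indicator {0..} x) \<partial>lborel) =
         (SUP n. \<integral>\<^sup>+x. ennreal (h x * indicator {0..r n} x) \<partial>lborel)"
proof -
  have "(\<integral>\<^sup>+x. (SUP n. ennreal (h x * indicator {0..r n} x)) \<partial>lborel) =
         (SUP n. \<integral>\<^sup>+x. ennreal (h x * indicator {0..r n} x) \<partial>lborel)"
  proof (rule nn_integral_monotone_convergence_SUP)
    show "incseq (\<lambda>n x. ennreal (h x * indicator {0..r n} x))"
      unfolding incseq_def le_fun_def
    proof (intro allI impI)
      fix m n :: nat and x assume "m \<le> n"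
      hence "r m \<le> r n" using inc by (simp add: incseq_def)
      thus "ennreal (h x * indicator {0..r m} x) \<le> ennreal (h x * indicator {0..r n} x)"
        by (cases "h x \<ge> 0") (auto simp: indicator_def intro!: ennreal_leI)
    qed
  qed (use h in measurable)
  moreover have "(SUP n. ennreal (h x * indicator {0..r n} x)) = ennreal (h x * indicator {0..} x)" for x
  proof (cases "x \<ge> 0")
    case True
    from lim have "eventually (\<lambda>n. r n \<ge> x) sequentially" by (simp add: filterlim_at_top)
    then obtain N where N: "\<And>n. n \<ge> N \<Longrightarrow> r n \<ge> x" by (auto simp: eventually_sequentially)
    show ?thesis
    proof (rule antisym)
      show "(SUP n. ennreal (h x * indicator {0..r n} x)) \<le> ennreal (h x * indicator {0..} x)"
        using True by (intro SUP_least) (cases "h x \<ge> 0", auto simp: indicator_def intro!: ennreal_leI)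
      have "ennreal (h x * indicator {0..} x) = ennreal (h x * indicator {0..r N} x)"
        using True N[of N] by (simp add: indicator_def)
      also have "\<dots> \<le> (SUP n. ennreal (h x * indicator {0..r n} x))" by (rule SUP_upper) auto
      finally show "ennreal (h x * indicator {0..} x) \<le> (SUP n. ennreal (h x * indicator {0..r n} x))" .
    qed
  qed (simp add: indicator_def)
  ultimately show ?thesis by simp
qed

lemma nn_subst_sq:
  fixes f :: "real \<Rightarrow> real" and c :: real
  assumes c: "c > 0" and f: "f \<in> borel_measurable borel"
  shows "(\<integral>\<^sup>+y. ennreal (f (c*y\<^sup>2) * (2*c*y) * indicator {0..} y) \<partial>lborel) =
         (\<integral>\<^sup>+x. ennreal (f x * indicator {0..} x) \<partial>lborel)"
proof -
  have inc1: "incseq (\<lambda>n::nat. real n)" by (simp add: incseq_def)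
  have inc2: "incseq (\<lambda>n::nat. c * (real n)\<^sup>2)" using c
    by (auto simp: incseq_def intro!: mult_left_mono power_mono)
  have lim1: "filterlim (\<lambda>n::nat. real n) at_top sequentially" by real_asymp
  have lim2: "filterlim (\<lambda>n::nat. c * (real n)\<^sup>2) at_top sequentially" using c by real_asymp
  have step: "(\<integral>\<^sup>+x. ennreal (f x * indicator {0..c * (real n)\<^sup>2} x) \<partial>lborel) =
      (\<integral>\<^sup>+y. ennreal (f (c*y\<^sup>2) * (2*c*y) * indicator {0..real n} y) \<partial>lborel)" for n :: nat
  proof -
    have "(\<integral>\<^sup>+x. f x * indicator {(\<lambda>y. c*y\<^sup>2) 0..(\<lambda>y. c*y\<^sup>2) (real n)} x \<partial>lborel) =
      (\<integral>\<^sup>+y. f ((\<lambda>y. c*y\<^sup>2) y) * (2*c*y) * indicator {0..real n} y \<partial>lborel)"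
    proof (rule nn_integral_substitution)
      show "set_borel_measurable borel {(\<lambda>y. c*y\<^sup>2) 0..(\<lambda>y. c*y\<^sup>2) (real n)} f"
        using f by (simp add: set_borel_measurable_def)
      show "((\<lambda>y. c*y\<^sup>2) has_real_derivative 2*c*x) (at x)" for x
        by (auto intro!: derivative_eq_intros)
      show "continuous_on {0..real n} (\<lambda>x. 2*c*x)" by (intro continuous_intros)
      show "0 \<le> 2*c*x" if "x \<in> {0..real n}" for x using that c by auto
    qed simp
    thus ?thesis by simp
  qed
  have "(\<integral>\<^sup>+y. ennreal (f (c*y\<^sup>2) * (2*c*y) * indicator {0..} y) \<partial>lborel) =
        (SUP n. \<integral>\<^sup>+y. ennreal (f (c*y\<^sup>2) * (2*c*y) * indicator {0..real n} y) \<partial>lborel)"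
    using nn_SUP_halfline[of "\<lambda>y. f (c*y\<^sup>2) * (2*c*y)", OF _ inc1 lim1] f by simp
  also have "\<dots> = (SUP n. \<integral>\<^sup>+x. ennreal (f x * indicator {0..c * (real n)\<^sup>2} x) \<partial>lborel)"
    by (simp add: step)
  also have "\<dots> = (\<integral>\<^sup>+x. ennreal (f x * indicator {0..} x) \<partial>lborel)"
    using nn_SUP_halfline[of f, OF f inc2 lim2] by simp
  finally show ?thesis .
qed



lemma moment_nn:
  fixes c p :: real
  assumes c: "c > 0" and p: "p > -1"
  shows "(\<integral>\<^sup>+y. ennreal (y powr p * exp (-c*y\<^sup>2) * indicator {0..} y) \<partial>lborel) =
         ennreal (Gamma ((p+1)/2) / (2 * c powr ((p+1)/2)))"
proof -
  define s where "s = (p+1)/2"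
  have s: "s > 0" using p by (simp add: s_def)
  define f where "f x = (x/c) powr ((p-1)/2) * exp(-x) / (2*c)" for x
  have fm: "f \<in> borel_measurable borel" unfolding f_def by measurable
  have eq1: "f (c*y\<^sup>2) * (2*c*y) * indicator {0..} y = y powr p * exp (-c*y\<^sup>2) * indicator {0..} y" for y
  proof (cases "y > 0")
    case True
    have e2: "2*((p-1)/2) = p - 1" by simp
    have "(c*y\<^sup>2/c) powr ((p-1)/2) = (y powr 2) powr ((p-1)/2)" using c True by simp
    also have "\<dots> = y powr (2*((p-1)/2))" by (rule powr_powr)
    also have "\<dots> = y powr (p-1)" by (subst e2) (rule refl)
    finally have "(c*y\<^sup>2/c) powr ((p-1)/2) * y = y powr p" using True
      by (simp add: powr_diff)
    then show ?thesis using c True unfolding f_def by (simp add: field_simps)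
  next
    case False
    then show ?thesis by (cases "y = 0") (auto simp: f_def indicator_def)
  qed
  have eq2: "f x * indicator {0..} x = (1/(2*c*c powr (s-1))) * (indicator {0..} x * x powr (s-1) / exp x)" for x
  proof (cases "x \<ge> 0")
    case True
    have "(x/c) powr ((p-1)/2) = x powr (s-1) / c powr (s-1)" using True c
      by (simp add: powr_divide s_def diff_divide_distrib)
    then show ?thesis using True c by (simp add: f_def indicator_def exp_minus field_simps)
  qed (simp add: indicator_def)
  have "(\<integral>\<^sup>+y. ennreal (y powr p * exp (-c*y\<^sup>2) * indicator {0..} y) \<partial>lborel)
      = (\<integral>\<^sup>+x. ennreal (f x * indicator {0..} x) \<partial>lborel)"
    using nn_subst_sq[OF c fm] by (simp add: eq1)
  also have "\<dots> = (\<integral>\<^sup>+x. ennreal (1/(2*c*c powr (s-1))) * ennreal (indicator {0..} x * x powr (s-1) / exp x) \<partial>lborel)"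
  proof (rule nn_integral_cong)
    fix x
    have "0 \<le> 1/(2*c*c powr (s-1))" using c by simp
    then show "ennreal (f x * indicator {0..} x) = ennreal (1/(2*c*c powr (s-1))) * ennreal (indicator {0..} x * x powr (s-1) / exp x)"
      unfolding eq2 by (rule ennreal_mult) (auto simp: indicator_def)
  qed
  also have "\<dots> = ennreal (1/(2*c*c powr (s-1))) * ennreal (Gamma s)"
    by (subst nn_integral_cmult) (simp_all add: Gamma_conv_nn_integral_real[OF s])
  also have "\<dots> = ennreal (Gamma s / (2 * c powr s))"
    using c s Gamma_real_pos[OF s]
    by (simp add: ennreal_mult'[symmetric] powr_diff field_simps)
  finally show ?thesis by (simp add: s_def)
qed



lemma alt_step:
  fixes f :: "nat \<Rightarrow> real"
  shows "(\<Sum>k\<le>Suc n. (-1)^k * real (Suc n choose k) * f k) =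
         (\<Sum>k\<le>n. (-1)^k * real (n choose k) * (f k - f (Suc k)))"
proof -
  have A: "(\<Sum>k\<le>Suc n. (-1)^k * real (Suc n choose k) * f k) =
        f 0 + (\<Sum>k\<le>n. (-1)^(Suc k) * real (Suc n choose Suc k) * f (Suc k))"
    by (subst sum.atMost_Suc_shift) simp
  have B: "(\<Sum>k\<le>n. (-1)^(Suc k) * real (Suc n choose Suc k) * f (Suc k)) =
        (\<Sum>k\<le>n. (-1)^(Suc k) * real (n choose Suc k) * f (Suc k)) - (\<Sum>k\<le>n. (-1)^k * real (n choose k) * f (Suc k))"
  proof -
    have "(\<Sum>k\<le>n. (-1)^(Suc k) * real (Suc n choose Suc k) * f (Suc k)) =
       (\<Sum>k\<le>n. (-1)^(Suc k) * real (n choose Suc k) * f (Suc k) - (-1)^k * real (n choose k) * f (Suc k))"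
      by (rule sum.cong) (simp_all add: algebra_simps)
    then show ?thesis by (simp add: sum_subtractf)
  qed
  have C: "f 0 + (\<Sum>k\<le>n. (-1)^(Suc k) * real (n choose Suc k) * f (Suc k)) =
        (\<Sum>k\<le>Suc n. (-1)^k * real (n choose k) * f k)"
    by (subst sum.atMost_Suc_shift) simp
  have D: "(\<Sum>k\<le>Suc n. (-1)^k * real (n choose k) * f k) = (\<Sum>k\<le>n. (-1)^k * real (n choose k) * f k)"
    by simp
  have E: "(\<Sum>k\<le>n. (-1)^k * real (n choose k) * (f k - f (Suc k))) =
     (\<Sum>k\<le>n. (-1)^k * real (n choose k) * f k) - (\<Sum>k\<le>n. (-1)^k * real (n choose k) * f (Suc k))"
    by (simp add: sum_subtractf[symmetric] right_diff_distrib)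
  show ?thesis using A B C D E by linarith
qed

lemma alt_sum_poch:
  "j < n \<Longrightarrow> (\<Sum>k\<le>n. (-1)^k * real (n choose k) * pochhammer (b + real k) j) = (0::real)"
proof (induction n arbitrary: j b)
  case 0 then show ?case by simp
next
  case (Suc n)
  show ?case
  proof (cases j)
    case 0
    then show ?thesis by (subst alt_step) simp
  next
    case (Suc i)
    have i: "i < n" using Suc.prems Suc by simp
    have diff: "pochhammer (b + real k) (Suc i) - pochhammer (b + real (Suc k)) (Suc i) =
          - (real i + 1) * pochhammer ((b + 1) + real k) i" for k
    proof -
      have 1: "pochhammer (b + real k) (Suc i) = (b + real k) * pochhammer ((b + 1) + real k) i"
        by (simp add: pochhammer_rec add_ac)
      have 2: "pochhammer (b + real (Suc k)) (Suc i) = pochhammer ((b + 1) + real k) i * ((b+1) + real k + real i)"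
        by (simp add: pochhammer_Suc add_ac)
      show ?thesis unfolding 1 2 by (simp add: algebra_simps)
    qed
    have "(\<Sum>k\<le>Suc n. (-1)^k * real (Suc n choose k) * pochhammer (b + real k) j)
        = (\<Sum>k\<le>n. (-1)^k * real (n choose k) * (- (real i + 1) * pochhammer ((b + 1) + real k) i))"
      unfolding Suc by (subst alt_step, simp only: diff)
    also have "\<dots> = - (real i + 1) * (\<Sum>k\<le>n. (-1)^k * real (n choose k) * pochhammer ((b + 1) + real k) i)"
      by (simp add: sum_distrib_left algebra_simps)
    also have "\<dots> = 0" using Suc.IH[OF i] by simp
    finally show ?thesis .
  qed
qed



definition lc :: "nat \<Rightarrow> real \<Rightarrow> nat \<Rightarrow> real" where
  "lc n a k = (-1)^k * ((real n + a) gchoose (n - k)) / fact k"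

lemma genlaguerre_lc: "genlaguerre n a x = (\<Sum>k\<le>n. lc n a k * x^k)"
  unfolding genlaguerre_def lc_def by (rule sum.cong) auto

lemma pos_not_nonpos_Int: "(z::real) > 0 \<Longrightarrow> z \<notin> \<int>\<^sub>\<le>\<^sub>0"
  using nonpos_Ints_nonpos[of z] by auto

lemma lc_Gamma:
  assumes a: "a > 0" and k: "k \<le> n"
  shows "lc n a k * Gamma (a + 1 + real k + real j) =
         Gamma (real n + a + 1) / fact n * ((-1)^k * real (n choose k) * pochhammer (a + 1 + real k) j)"
proof -
  have g: "((real n + a) gchoose (n - k)) = Gamma (real n + a + 1) / (fact (n-k) * Gamma (a + 1 + real k))"
  proof -
    have "((real n + a) gchoose (n - k)) = Gamma (real n + a + 1) / (fact (n-k) * Gamma (real n + a - real (n - k) + 1))"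
      by (rule gbinomial_Gamma) (use a in \<open>auto intro!: pos_not_nonpos_Int\<close>)
    also have "real n + a - real (n - k) + 1 = a + 1 + real k" using k by (simp add: of_nat_diff)
    finally show ?thesis .
  qed
  have p: "pochhammer (a + 1 + real k) j = Gamma (a + 1 + real k + real j) / Gamma (a + 1 + real k)"
    by (rule pochhammer_Gamma) (use a in \<open>auto intro!: pos_not_nonpos_Int\<close>)
  have G: "Gamma (a + 1 + real k) > 0" using a by auto
  show ?thesis
    unfolding lc_def g p binomial_fact[OF k] using G by (simp add: field_simps)
qed

lemma lc_orth:
  assumes a: "a > 0" and j: "j < n"
  shows "(\<Sum>k\<le>n. lc n a k * Gamma (a + 1 + real k + real j)) = 0"
proof -
  have "(\<Sum>k\<le>n. lc n a k * Gamma (a + 1 + real k + real j)) =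
     (\<Sum>k\<le>n. Gamma (real n + a + 1) / fact n * ((-1)^k * real (n choose k) * pochhammer ((a + 1) + real k) j))"
    by (rule sum.cong) (simp_all add: lc_Gamma[OF a])
  also have "\<dots> = Gamma (real n + a + 1) / fact n * (\<Sum>k\<le>n. (-1)^k * real (n choose k) * pochhammer ((a + 1) + real k) j)"
    by (simp add: sum_distrib_left)
  also have "\<dots> = 0" using alt_sum_poch[OF j] by simp
  finally show ?thesis .
qed



lemma moment_hbi:
  fixes c p :: real
  assumes c: "c > 0" and p: "p > -1"
  shows "has_bochner_integral lborel (\<lambda>y. indicator {0<..} y * (y powr p * exp (-c*y\<^sup>2)))
           (Gamma ((p+1)/2) / (2 * c powr ((p+1)/2)))"
proof (rule has_bochner_integral_nn_integral)
  show "(\<lambda>y. indicator {0<..} y * (y powr p * exp (-c*y\<^sup>2))) \<in> borel_measurable lborel" by measurable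
  show "AE x in lborel. 0 \<le> indicator {0<..} x * (x powr p * exp (- c * x\<^sup>2))" by auto
  show "0 \<le> Gamma ((p+1)/2) / (2 * c powr ((p+1)/2))" using c p by (intro divide_nonneg_pos) auto
  have "(\<integral>\<^sup>+x. ennreal (indicator {0<..} x * (x powr p * exp (- c * x\<^sup>2))) \<partial>lborel) =
        (\<integral>\<^sup>+y. ennreal (y powr p * exp (-c*y\<^sup>2) * indicator {0..} y) \<partial>lborel)"
    by (rule nn_integral_cong) (auto simp: indicator_def)
  also have "\<dots> = ennreal (Gamma ((p+1)/2) / (2 * c powr ((p+1)/2)))" by (rule moment_nn[OF c p])
  finally show "(\<integral>\<^sup>+x. ennreal (indicator {0<..} x * (x powr p * exp (- c * x\<^sup>2))) \<partial>lborel) =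
        ennreal (Gamma ((p+1)/2) / (2 * c powr ((p+1)/2)))" .
qed

lemma omega_ge1: "d \<ge> 7 \<Longrightarrow> omega d \<ge> 1"
proof -
  assume d: "d \<ge> 7"
  have "(real d - 1) * (real d - 7) \<ge> 0" using d by (intro mult_nonneg_nonneg) auto
  hence "real d ^ 2 - 8 * real d + 8 \<ge> 1" by (simp add: algebra_simps power2_eq_square)
  thus ?thesis unfolding omega_def by (simp add: real_le_rsqrt)
qed

lemma omega_lt: "d \<ge> 7 \<Longrightarrow> omega d < real d - 4"
proof -
  assume d: "d \<ge> 7"
  have "real d ^ 2 - 8 * real d + 8 < (real d - 4)^2" by (simp add: algebra_simps power2_eq_square)
  hence "sqrt (real d ^ 2 - 8 * real d + 8) < sqrt ((real d - 4)^2)" by (rule real_sqrt_less_mono)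
  also have "\<dots> = real d - 4" using d by simp
  finally show ?thesis unfolding omega_def .
qed

lemma gamma_gt1: "d \<ge> 7 \<Longrightarrow> gamma d > 1"
  using omega_lt[of d] unfolding gamma_def by simp

lemma exponent_id: "d \<ge> 7 \<Longrightarrow> real (d - 1) - 2 * gamma d = 1 + omega d"
  unfolding gamma_def by (simp add: of_nat_diff field_simps)



definition gfun :: "nat \<Rightarrow> nat \<Rightarrow> real \<Rightarrow> real" where
  "gfun d i y = y powr (1 + omega d) * (y\<^sup>2/4)^i * exp (-(y\<^sup>2)/4)"

lemma g_hbi:
  assumes d: "d \<ge> 7"
  shows "has_bochner_integral lborel (\<lambda>y. indicator {0<..} y * gfun d i y)
           (2 * 4 powr (omega d / 2) * Gamma (omega d / 2 + 1 + real i))"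
proof -
  define p where "p = 1 + omega d + 2 * real i"
  have om: "omega d \<ge> 1" using omega_ge1[OF d] .
  have p: "p > -1" using om by (simp add: p_def)
  have h: "has_bochner_integral lborel (\<lambda>y. (1/4^i) * (indicator {0<..} y * (y powr p * exp (-(1/4)*y\<^sup>2))))
           ((1/4^i) * (Gamma ((p+1)/2) / (2 * (1/4) powr ((p+1)/2))))"
    by (rule has_bochner_integral_mult_right) (rule moment_hbi, simp_all add: p)
  have pt: "indicator {0<..} y * gfun d i y = (1/4^i) * (indicator {0<..} y * (y powr p * exp (-(1/4)*y\<^sup>2)))" for y
  proof (cases "y > 0")
    case True
    have "y powr p = y powr (1 + omega d) * y powr (2 * real i)" unfolding p_def by (simp add: powr_add)
    also have "y powr (2 * real i) = (y\<^sup>2)^i"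
    proof -
      have "(y\<^sup>2)^i = y ^ (2*i)" by (simp add: power_mult)
      also have "\<dots> = y powr real (2*i)" using True by (rule powr_realpow[symmetric])
      finally show ?thesis by simp
    qed
    finally have "y powr p = y powr (1 + omega d) * (y\<^sup>2)^i" .
    then show ?thesis using True unfolding gfun_def by (simp add: power_divide field_simps)
  qed (simp add: indicator_def)
  have v: "(1/4^i) * (Gamma ((p+1)/2) / (2 * (1/4) powr ((p+1)/2))) = 2 * 4 powr (omega d / 2) * Gamma (omega d / 2 + 1 + real i)"
  proof -
    have e: "(p+1)/2 = omega d / 2 + 1 + real i" by (simp add: p_def field_simps)
    have "(1/4::real) powr ((p+1)/2) = 1 / 4 powr ((p+1)/2)" by (simp add: powr_divide)
    moreover have "(4::real) powr ((p+1)/2) = 4 powr (omega d / 2) * 4 ^ (i+1)"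
    proof -
      have "(4::real) powr (omega d / 2 + 1 + real i) = 4 powr (omega d / 2) * 4 powr real (i+1)"
      proof -
        have eq: "omega d / 2 + 1 + real i = omega d / 2 + real (i+1)" by simp
        show ?thesis unfolding eq by (rule powr_add)
      qed
      also have "(4::real) powr real (i+1) = 4 ^ (i+1)" by (rule powr_realpow) simp
      finally show ?thesis unfolding e .
    qed
    ultimately show ?thesis unfolding e[symmetric] by (simp add: field_simps)
  qed
  show ?thesis using h unfolding pt[symmetric] v by simp
qed

lemma raw_prod:
  assumes d: "d \<ge> 7" and y: "y > 0"
  shows "phi_raw d n y * phi_raw d m y * rho d y =
    (\<Sum>k\<le>n. \<Sum>j\<le>m. lc n (omega d / 2) k * lc m (omega d / 2) j * gfun d (k+j) y)"
proof -
  define a where "a = omega d / 2"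
  have pw: "y powr (- gamma d) * y powr (- gamma d) * y ^ (d - 1) = y powr (1 + omega d)"
  proof -
    have "y ^ (d - 1) = y powr real (d - 1)" using y by (simp add: powr_realpow)
    hence "y powr (- gamma d) * y powr (- gamma d) * y ^ (d - 1) = y powr (real (d - 1) - 2 * gamma d)"
      by (simp add: powr_add[symmetric])
    thus ?thesis using exponent_id[OF d] by simp
  qed
  have "phi_raw d n y * phi_raw d m y * rho d y =
     (y powr (- gamma d) * y powr (- gamma d) * y ^ (d - 1)) * exp (- (y\<^sup>2) / 4) *
     ((\<Sum>k\<le>n. lc n a k * (y\<^sup>2/4)^k) * (\<Sum>j\<le>m. lc m a j * (y\<^sup>2/4)^j))"
    unfolding phi_raw_def rho_def genlaguerre_lc a_def by (simp add: algebra_simps)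
  also have "\<dots> = y powr (1 + omega d) * exp (- (y\<^sup>2) / 4) *
     (\<Sum>k\<le>n. \<Sum>j\<le>m. lc n a k * (y\<^sup>2/4)^k * (lc m a j * (y\<^sup>2/4)^j))"
    unfolding pw by (simp only: sum_product)
  also have "\<dots> = (\<Sum>k\<le>n. \<Sum>j\<le>m. y powr (1 + omega d) * exp (- (y\<^sup>2) / 4) * (lc n a k * (y\<^sup>2/4)^k * (lc m a j * (y\<^sup>2/4)^j)))"
    by (simp add: sum_distrib_left)
  also have "\<dots> = (\<Sum>k\<le>n. \<Sum>j\<le>m. lc n a k * lc m a j * gfun d (k+j) y)"
    unfolding gfun_def by (intro sum.cong refl) (simp add: power_add)
  finally show ?thesis by (simp add: a_def)
qed

definition orthval :: "nat \<Rightarrow> nat \<Rightarrow> nat \<Rightarrow> real" where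
  "orthval d n m = (\<Sum>k\<le>n. \<Sum>j\<le>m. lc n (omega d / 2) k * lc m (omega d / 2) j *
       (2 * 4 powr (omega d / 2) * Gamma (omega d / 2 + 1 + real (k+j))))"

lemma raw_hbi:
  assumes d: "d \<ge> 7"
  shows "has_bochner_integral lborel (\<lambda>y. indicator {0<..} y * (phi_raw d n y * phi_raw d m y * rho d y)) (orthval d n m)"
proof -
  have "has_bochner_integral lborel (\<lambda>y. \<Sum>k\<le>n. \<Sum>j\<le>m. lc n (omega d / 2) k * lc m (omega d / 2) j * (indicator {0<..} y * gfun d (k+j) y)) (orthval d n m)"
    unfolding orthval_def
    by (intro has_bochner_integral_sum has_bochner_integral_mult_right g_hbi[OF d])
  moreover have "indicator {0<..} y * (phi_raw d n y * phi_raw d m y * rho d y) =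
      (\<Sum>k\<le>n. \<Sum>j\<le>m. lc n (omega d / 2) k * lc m (omega d / 2) j * (indicator {0<..} y * gfun d (k+j) y))" for y
  proof (cases "y > 0")
    case True
    then show ?thesis unfolding raw_prod[OF d True] by (simp add: indicator_def)
  qed (simp add: indicator_def)
  ultimately show ?thesis by simp
qed

lemma orthval_zero:
  assumes d: "d \<ge> 7" and nm: "n \<noteq> m"
  shows "orthval d n m = 0"
proof -
  define a where "a = omega d / 2"
  have a: "a > 0" using omega_ge1[OF d] by (simp add: a_def)
  define c where "c = 2 * 4 powr a"
  have ov: "orthval d n m = (\<Sum>k\<le>n. \<Sum>j\<le>m. lc n a k * lc m a j * (c * Gamma (a + 1 + real k + real j)))"
    unfolding orthval_def a_def c_def by (simp add: add_ac)
  show ?thesis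
  proof (cases "m < n")
    case True
    have "orthval d n m = (\<Sum>j\<le>m. lc m a j * c * (\<Sum>k\<le>n. lc n a k * Gamma (a + 1 + real k + real j)))"
      unfolding ov by (subst sum.swap) (simp add: sum_distrib_left algebra_simps)
    also have "\<dots> = 0" using True by (intro sum.neutral ballI) (simp add: lc_orth[OF a])
    finally show ?thesis .
  next
    case False
    with nm have nm': "n < m" by simp
    have "orthval d n m = (\<Sum>k\<le>n. lc n a k * c * (\<Sum>j\<le>m. lc m a j * Gamma (a + 1 + real j + real k)))"
      unfolding ov by (simp add: sum_distrib_left algebra_simps)
    also have "\<dots> = 0" using nm' by (intro sum.neutral ballI) (simp add: lc_orth[OF a])
    finally show ?thesis .
  qed
qed



lemma hinner_alt: "hinner d f g = integral\<^sup>L lborel (\<lambda>y. indicator {0<..} y * (f y * g y * rho d y))"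
  unfolding hinner_def set_lebesgue_integral_def by simp

lemma raw_int:
  assumes d: "d \<ge> 7"
  shows "integrable lborel (\<lambda>y. indicator {0<..} y * (phi_raw d n y * phi_raw d m y * rho d y))"
    and "hinner d (phi_raw d n) (phi_raw d m) = orthval d n m"
  using raw_hbi[OF d, of n m, unfolded has_bochner_integral_iff] unfolding hinner_alt by auto

lemma phi_int:
  assumes d: "d \<ge> 7"
  shows "integrable lborel (\<lambda>y. indicator {0<..} y * (phi d n y * phi d m y * rho d y))"
    and "hinner d (phi d n) (phi d m) = normconst d n * normconst d m * orthval d n m"
proof -
  have eq: "indicator {0<..} y * (phi d n y * phi d m y * rho d y) =
     normconst d n * normconst d m * (indicator {0<..} y * (phi_raw d n y * phi_raw d m y * rho d y))" for y
    unfolding phi_def by (simp add: algebra_simps)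
  show "integrable lborel (\<lambda>y. indicator {0<..} y * (phi d n y * phi d m y * rho d y))"
    unfolding eq using raw_int(1)[OF d] by simp
  show "hinner d (phi d n) (phi d m) = normconst d n * normconst d m * orthval d n m"
    unfolding hinner_alt eq using raw_int[OF d, of n m] unfolding hinner_alt by simp
qed

lemma orthval_nonneg:
  assumes d: "d \<ge> 7"
  shows "orthval d n n \<ge> 0"
proof -
  have "0 \<le> integral\<^sup>L lborel (\<lambda>y. indicator {0<..} y * (phi_raw d n y * phi_raw d n y * rho d y))"
    by (intro integral_nonneg_AE AE_I2) (auto simp: rho_def indicator_def)
  thus ?thesis using raw_int(2)[OF d, of n n] unfolding hinner_alt by simp
qed

lemma phi_orth:
  assumes d: "d \<ge> 7" and nm: "n \<noteq> m"
  shows "hinner d (phi d n) (phi d m) = 0"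
  using phi_int(2)[OF d] orthval_zero[OF d nm] by simp

lemma phi_norm_le1:
  assumes d: "d \<ge> 7"
  shows "hinner d (phi d n) (phi d n) \<le> 1"
proof -
  have ov: "orthval d n n \<ge> 0" by (rule orthval_nonneg[OF d])
  have "normconst d n = 1 / sqrt (orthval d n n)"
    unfolding normconst_def hnorm_def raw_int(2)[OF d] ..
  hence "hinner d (phi d n) (phi d n) = orthval d n n / (sqrt (orthval d n n))^2"
    using phi_int(2)[OF d, of n n] by (simp add: power2_eq_square)
  also have "\<dots> \<le> 1" using ov by (cases "orthval d n n = 0") auto
  finally show ?thesis .
qed

lemma phi_meas[measurable]: "phi d n \<in> borel_measurable borel"
  unfolding phi_def phi_raw_def genlaguerre_def by measurable

lemma genlaguerre_bound:
  assumes x: "x \<ge> 0"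
  shows "\<bar>genlaguerre n a x\<bar> \<le> (\<Sum>k\<le>n. \<bar>lc n a k\<bar>) * (1 + x)^n"
proof -
  have "\<bar>genlaguerre n a x\<bar> \<le> (\<Sum>k\<le>n. \<bar>lc n a k * x^k\<bar>)"
    unfolding genlaguerre_lc by (rule sum_abs)
  also have "\<dots> \<le> (\<Sum>k\<le>n. \<bar>lc n a k\<bar> * (1 + x)^n)"
  proof (rule sum_mono)
    fix k assume k: "k \<in> {..n}"
    have "x^k \<le> (1+x)^k" using x by (intro power_mono) auto
    also have "\<dots> \<le> (1+x)^n" using x k by (intro power_increasing) auto
    finally show "\<bar>lc n a k * x^k\<bar> \<le> \<bar>lc n a k\<bar> * (1 + x)^n"
      using x by (simp add: abs_mult mult_left_mono)
  qed
  finally show ?thesis by (simp add: sum_distrib_right)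
qed

definition Bc :: "nat \<Rightarrow> nat \<Rightarrow> real" where
  "Bc d n = \<bar>normconst d n\<bar> * (\<Sum>k\<le>n. \<bar>lc n (omega d / 2) k\<bar>)"

lemma Bc_nonneg: "Bc d n \<ge> 0" unfolding Bc_def by simp

lemma phi_bound:
  assumes y: "y > 0"
  shows "\<bar>phi d n y\<bar> \<le> Bc d n * y powr (- gamma d) * (1 + y\<^sup>2)^n"
proof -
  have "\<bar>genlaguerre n (omega d / 2) (y\<^sup>2/4)\<bar> \<le> (\<Sum>k\<le>n. \<bar>lc n (omega d / 2) k\<bar>) * (1 + y\<^sup>2/4)^n"
    by (rule genlaguerre_bound) simp
  also have "\<dots> \<le> (\<Sum>k\<le>n. \<bar>lc n (omega d / 2) k\<bar>) * (1 + y\<^sup>2)^n"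
    by (intro mult_left_mono power_mono) (auto intro: sum_nonneg)
  finally have "\<bar>genlaguerre n (omega d / 2) (y\<^sup>2/4)\<bar> \<le> (\<Sum>k\<le>n. \<bar>lc n (omega d / 2) k\<bar>) * (1 + y\<^sup>2)^n" .
  hence "\<bar>normconst d n\<bar> * y powr (- gamma d) * \<bar>genlaguerre n (omega d / 2) (y\<^sup>2/4)\<bar> \<le>
        \<bar>normconst d n\<bar> * y powr (- gamma d) * ((\<Sum>k\<le>n. \<bar>lc n (omega d / 2) k\<bar>) * (1 + y\<^sup>2)^n)"
    by (intro mult_left_mono) auto
  thus ?thesis unfolding phi_def phi_raw_def Bc_def using y by (simp add: abs_mult mult_ac)
qed



lemma U_bound:
  fixes U :: "real \<Rightarrow> real" and g :: real
  assumes U_sol: "solves_U d \<alpha> U" and g: "g > 0"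
    and U_asymp: "\<exists>c>0. (\<lambda>r. U r - (pi/2 - c * r powr (- g))) \<in> O[at_top](\<lambda>r. r powr (- g - 2))"
  shows "\<exists>CU>0. \<forall>r>0. \<bar>U r - pi/2\<bar> \<le> CU * r powr (- g)"
proof -
  obtain c where c: "c > 0" and bo: "(\<lambda>r. U r - (pi/2 - c * r powr (- g))) \<in> O[at_top](\<lambda>r. r powr (- g - 2))"
    using U_asymp by blast
  obtain M where M: "M > 0" and ev: "eventually (\<lambda>r. norm (U r - (pi/2 - c * r powr (- g))) \<le> M * norm (r powr (- g - 2))) at_top"
    using bo by (elim landau_o.bigE)
  obtain r0 where r0: "\<And>r. r \<ge> r0 \<Longrightarrow> norm (U r - (pi/2 - c * r powr (- g))) \<le> M * norm (r powr (- g - 2))"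
    using ev by (auto simp: eventually_at_top_linorder)
  define r1 where "r1 = max r0 1"
  have big: "\<bar>U r - pi/2\<bar> \<le> (c + M) * r powr (- g)" if r: "r \<ge> r1" for r
  proof -
    have r1: "r \<ge> 1" "r \<ge> r0" using r by (auto simp: r1_def)
    have "r powr (- g - 2) \<le> r powr (- g)" using r1 by (intro powr_mono) auto
    hence "\<bar>U r - (pi/2 - c * r powr (- g))\<bar> \<le> M * r powr (- g)"
      using r0[OF r1(2)] M r1 by (simp add: order_trans[OF _ mult_left_mono])
    moreover have "\<bar>U r - pi/2\<bar> \<le> \<bar>U r - (pi/2 - c * r powr (- g))\<bar> + \<bar>c * r powr (- g)\<bar>"
      by linarith
    moreover have "\<bar>c * r powr (- g)\<bar> = c * r powr (- g)" using c by simp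
    ultimately show ?thesis by (simp add: distrib_right)
  qed
  have cont: "continuous_on {0..r1} U"
  proof -
    have "continuous (at x within {0..r1}) U" if x: "x \<in> {0..r1}" for x
    proof (cases "x = 0")
      case True
      have "(U has_real_derivative \<alpha>) (at 0 within {0..})" using U_sol by (simp add: solves_U_def)
      hence "continuous (at 0 within {0..}) U" by (rule DERIV_continuous)
      hence "continuous (at 0 within {0..r1}) U" by (rule continuous_within_subset) auto
      thus ?thesis using True by simp
    next
      case False
      with x have "x > 0" by auto
      hence "(U has_real_derivative deriv U x) (at x)" using U_sol by (simp add: solves_U_def)
      hence "isCont U x" by (rule DERIV_isCont)
      thus ?thesis by (rule continuous_at_imp_continuous_at_within)
    qed
    thus ?thesis by (simp add: continuous_on_eq_continuous_within)
  qed
  have "compact (U ` {0..r1})" by (rule compact_continuous_image[OF cont]) simp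
  then obtain B where B: "\<And>r. r \<in> {0..r1} \<Longrightarrow> \<bar>U r\<bar> \<le> B"
    by (metis compact_imp_bounded bounded_iff imageI real_norm_def)
  have B0: "B \<ge> 0" using B[of 0] by (simp add: r1_def) linarith
  define CU where "CU = c + M + (B + pi/2) * r1 powr g"
  have r1pos: "r1 \<ge> 1" by (simp add: r1_def)
  show ?thesis
  proof (intro exI[of _ CU] conjI allI impI)
    show "CU > 0" unfolding CU_def using c M B0 r1pos by (intro add_pos_nonneg) auto
    fix r :: real assume r: "r > 0"
    show "\<bar>U r - pi/2\<bar> \<le> CU * r powr (- g)"
    proof (cases "r \<ge> r1")
      case True
      have "(c + M) * r powr (- g) \<le> CU * r powr (- g)"
        unfolding CU_def using B0 r1pos by (intro mult_right_mono) auto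
      thus ?thesis using big[OF True] by linarith
    next
      case False
      have "\<bar>U r\<bar> \<le> B" using B[of r] r False by auto
      hence "\<bar>U r - pi/2\<bar> \<le> B + pi/2" using pi_gt_zero by linarith
      also have "\<dots> = (B + pi/2) * r1 powr g * r1 powr (- g)" using r1pos by (simp add: powr_minus field_simps)
      also have "\<dots> \<le> (B + pi/2) * r1 powr g * r powr (- g)"
        using False r g B0 by (intro mult_left_mono powr_mono2') auto
      also have "\<dots> \<le> CU * r powr (- g)" unfolding CU_def using c M by (intro mult_right_mono) auto
      finally show ?thesis .
    qed
  qed
qed



lemma sum_phi_le:
  assumes y: "y > 0"
  shows "(\<Sum>n\<le>l. \<bar>phi d n y\<bar>) \<le> (\<Sum>n\<le>l. Bc d n * y powr (- gamma d) * (1 + y\<^sup>2)^n)"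
  by (intro sum_mono phi_bound[OF y])

lemma e_pointwise:
  fixes d l :: nat and s0 kt \<sigma>t CU y :: real and q :: "nat \<Rightarrow> real" and \<psi> U :: "real \<Rightarrow> real"
  defines "\<gamma> \<equiv> gamma d" and "lm \<equiv> lam d l"
  defines "\<omega>l \<equiv> lm / \<gamma>"
  defines "\<delta> \<equiv> exp (kt * \<omega>l * s0) * exp (- \<omega>l * s0)" and "R \<equiv> exp (\<sigma>t * s0)"
  defines "B \<equiv> (\<Sum>n\<le>l. Bc d n)"
  defines "e \<equiv> (\<lambda>y. exp (lm * s0) * ((\<Sum>n<l. q n * phi d n y) - \<psi> y) - phi d l y)"
  assumes d: "d \<ge> 7" and lam: "lm > 0" and s0: "s0 > 0" and kt: "kt < 1" and \<sigma>t: "\<sigma>t > 0"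
    and CU: "CU > 0" "\<And>r. r > 0 \<Longrightarrow> \<bar>U r - pi/2\<bar> \<le> CU * r powr (- \<gamma>)"
    and q: "\<And>n. n < l \<Longrightarrow> \<bar>q n\<bar> \<le> exp (- lm * s0)"
    and \<psi>1: "\<forall>y. 0 < y \<and> y < \<delta> \<longrightarrow> \<psi> y = U (y * exp (\<omega>l * s0)) - pi/2"
    and \<psi>2: "\<forall>y. \<delta> \<le> y \<and> y < R \<longrightarrow> \<psi> y = (\<Sum>n<l. q n * phi d n y) - exp (- lm * s0) * phi d l y"
    and \<psi>3: "\<forall>y. R \<le> y \<longrightarrow> \<bar>\<psi> y\<bar> \<le> pi/2"
    and y: "y > 0"
  shows "(e y)\<^sup>2 * rho d y \<le> indicator {..<\<delta>} y * (B * 2^l + CU)\<^sup>2 +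
           exp (2 * lm * s0) * exp (- R\<^sup>2 / 8) * ((pi/2 + B) * 2^l)\<^sup>2 * (y powr real (4*l + d - 1) * exp (-(1/8) * y\<^sup>2))"
proof -
  have gam: "\<gamma> > 1" unfolding \<gamma>_def by (rule gamma_gt1[OF d])
  have om: "omega d \<ge> 1" by (rule omega_ge1[OF d])
  have \<omega>l: "\<omega>l > 0" unfolding \<omega>l_def using lam gam by simp
  have \<delta>: "\<delta> = exp (- ((1 - kt) * \<omega>l * s0))" unfolding \<delta>_def by (simp add: exp_add[symmetric] algebra_simps)
  have \<delta>1: "\<delta> < 1" unfolding \<delta> using kt \<omega>l s0 by simp
  have R1: "R > 1" unfolding R_def using \<sigma>t s0 by simp
  have B0: "B \<ge> 0" unfolding B_def by (intro sum_nonneg) (simp add: Bc_nonneg)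
  have rho0: "rho d y \<ge> 0" unfolding rho_def using y by simp
  have el: "exp (lm * s0) \<ge> 1" using lam s0 by simp
  have qphi: "\<bar>exp (lm * s0) * (\<Sum>n<l. q n * phi d n y)\<bar> \<le> (\<Sum>n<l. \<bar>phi d n y\<bar>)"
  proof -
    have "\<bar>exp (lm * s0) * (\<Sum>n<l. q n * phi d n y)\<bar> \<le> exp (lm * s0) * (\<Sum>n<l. \<bar>q n\<bar> * \<bar>phi d n y\<bar>)"
    proof -
      have "\<bar>(\<Sum>n<l. q n * phi d n y)\<bar> \<le> (\<Sum>n<l. \<bar>q n * phi d n y\<bar>)" by (rule sum_abs)
      hence "\<bar>(\<Sum>n<l. q n * phi d n y)\<bar> \<le> (\<Sum>n<l. \<bar>q n\<bar> * \<bar>phi d n y\<bar>)" by (simp add: abs_mult)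
      thus ?thesis by (simp add: abs_mult)
    qed
    also have "\<dots> \<le> exp (lm * s0) * (\<Sum>n<l. exp (- lm * s0) * \<bar>phi d n y\<bar>)"
      by (intro mult_left_mono sum_mono mult_right_mono q) auto
    also have "\<dots> = (\<Sum>n<l. \<bar>phi d n y\<bar>)" by (simp add: sum_distrib_left exp_minus field_simps)
    finally show ?thesis .
  qed
  have sumsplit: "(\<Sum>n<l. \<bar>phi d n y\<bar>) + \<bar>phi d l y\<bar> = (\<Sum>n\<le>l. \<bar>phi d n y\<bar>)"
    by (simp add: lessThan_Suc_atMost[symmetric])
  have ebase: "\<bar>e y\<bar> \<le> (\<Sum>n\<le>l. \<bar>phi d n y\<bar>) + exp (lm * s0) * \<bar>\<psi> y\<bar>"
  proof -
    have "\<bar>e y\<bar> \<le> \<bar>exp (lm * s0) * (\<Sum>n<l. q n * phi d n y)\<bar> + \<bar>exp (lm * s0) * \<psi> y\<bar> + \<bar>phi d l y\<bar>"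
    proof -
      have "e y = exp (lm * s0) * (\<Sum>n<l. q n * phi d n y) - exp (lm * s0) * \<psi> y - phi d l y"
        unfolding e_def by (simp add: right_diff_distrib)
      moreover have "\<bar>a - b - c\<bar> \<le> \<bar>a\<bar> + \<bar>b\<bar> + \<bar>c\<bar>" for a b c :: real by linarith
      ultimately show ?thesis by metis
    qed
    thus ?thesis using qphi sumsplit by (simp add: abs_mult)
  qed
  consider (r1) "y < \<delta>" | (r2) "\<delta> \<le> y" "y < R" | (r3) "R \<le> y" by linarith
  then show ?thesis
  proof cases
    case r1
    have y1: "y < 1" using r1 \<delta>1 by simp
    have "(\<Sum>n\<le>l. \<bar>phi d n y\<bar>) \<le> (\<Sum>n\<le>l. Bc d n * y powr (- \<gamma>) * 2^l)"
    proof (rule sum_mono)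
      fix n assume n: "n \<in> {..l}"
      have "(1 + y\<^sup>2)^n \<le> 2^n" using y y1 by (intro power_mono) (auto simp: power2_eq_square mult_le_one)
      also have "(2::real)^n \<le> 2^l" using n by (intro power_increasing) auto
      finally have "Bc d n * y powr (- \<gamma>) * (1 + y\<^sup>2)^n \<le> Bc d n * y powr (- \<gamma>) * 2^l"
        by (intro mult_left_mono) (auto simp: Bc_nonneg)
      thus "\<bar>phi d n y\<bar> \<le> Bc d n * y powr (- \<gamma>) * 2^l" using phi_bound[OF y, of d n] unfolding \<gamma>_def by linarith
    qed
    also have "\<dots> = B * 2^l * y powr (- \<gamma>)" unfolding B_def sum_distrib_right by (simp add: mult_ac)
    finally have s1: "(\<Sum>n\<le>l. \<bar>phi d n y\<bar>) \<le> B * 2^l * y powr (- \<gamma>)" .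
    have "exp (lm * s0) * \<bar>\<psi> y\<bar> = exp (lm * s0) * \<bar>U (y * exp (\<omega>l * s0)) - pi/2\<bar>" using \<psi>1 y r1 by simp
    also have "\<dots> \<le> exp (lm * s0) * (CU * (y * exp (\<omega>l * s0)) powr (- \<gamma>))"
      using CU(2)[of "y * exp (\<omega>l * s0)"] y by (intro mult_left_mono) auto
    also have "(y * exp (\<omega>l * s0)) powr (- \<gamma>) = y powr (- \<gamma>) * exp (- lm * s0)"
    proof -
      have "(y * exp (\<omega>l * s0)) powr (- \<gamma>) = y powr (- \<gamma>) * exp (\<omega>l * s0) powr (- \<gamma>)"
        using y by (simp add: powr_mult)
      also have "exp (\<omega>l * s0) powr (- \<gamma>) = exp (- lm * s0)"
        using gam unfolding \<omega>l_def by (simp add: powr_def)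
      finally show ?thesis .
    qed
    finally have s2: "exp (lm * s0) * \<bar>\<psi> y\<bar> \<le> CU * y powr (- \<gamma>)" by (simp add: exp_minus field_simps)
    have eb: "\<bar>e y\<bar> \<le> (B * 2^l + CU) * y powr (- \<gamma>)" using ebase s1 s2 by (simp add: distrib_right)
    have "(e y)\<^sup>2 \<le> ((B * 2^l + CU) * y powr (- \<gamma>))\<^sup>2"
      using eb by (metis abs_ge_zero order_trans power2_abs power_mono)
    hence "(e y)\<^sup>2 * rho d y \<le> ((B * 2^l + CU) * y powr (- \<gamma>))\<^sup>2 * rho d y"
      using rho0 by (rule mult_right_mono)
    also have "\<dots> = (B * 2^l + CU)\<^sup>2 * (y powr (- \<gamma>) * y powr (- \<gamma>) * y ^ (d - 1)) * exp (- (y\<^sup>2) / 4)"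
      unfolding rho_def by (simp add: power2_eq_square mult_ac)
    also have "y powr (- \<gamma>) * y powr (- \<gamma>) * y ^ (d - 1) = y powr (1 + omega d)"
    proof -
      have "y ^ (d - 1) = y powr real (d - 1)" using y by (simp add: powr_realpow)
      hence "y powr (- \<gamma>) * y powr (- \<gamma>) * y ^ (d - 1) = y powr (real (d - 1) - 2 * \<gamma>)"
        by (simp add: powr_add[symmetric])
      thus ?thesis using exponent_id[OF d] unfolding \<gamma>_def by simp
    qed
    also have "(B * 2^l + CU)\<^sup>2 * y powr (1 + omega d) * exp (- (y\<^sup>2) / 4) \<le> (B * 2^l + CU)\<^sup>2 * 1 * 1"
      using y y1 om by (intro mult_mono powr_le1) (auto intro!: powr_le1 mult_le_one simp: powr_le1)
    finally have "(e y)\<^sup>2 * rho d y \<le> indicator {..<\<delta>} y * (B * 2^l + CU)\<^sup>2" using r1 by simp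
    moreover have "0 \<le> exp (2 * lm * s0) * exp (- R\<^sup>2 / 8) * ((pi/2 + B) * 2^l)\<^sup>2 * (y powr real (4*l + d - 1) * exp (-(1/8) * y\<^sup>2))"
      by simp
    ultimately show ?thesis by linarith
  next
    case r2
    have "e y = 0" unfolding e_def using \<psi>2 r2 by (simp add: exp_minus field_simps)
    then show ?thesis by (simp add: indicator_def)
  next
    case r3
    have y1: "y \<ge> 1" using r3 R1 by simp
    have yy: "1 \<le> y * y" using mult_mono[of 1 y 1 y] y1 by simp
    have "(\<Sum>n\<le>l. \<bar>phi d n y\<bar>) \<le> (\<Sum>n\<le>l. Bc d n * (2 * y\<^sup>2)^l)"
    proof (rule sum_mono)
      fix n assume n: "n \<in> {..l}"
      have yg: "y powr (- \<gamma>) \<le> 1" using powr_mono[of "- \<gamma>" 0 y] y1 gam by simp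
      have "(1 + y\<^sup>2)^n \<le> (2 * y\<^sup>2)^n" using y1 by (intro power_mono) (use yy in \<open>auto simp: power2_eq_square one_le_power\<close>)
      also have "\<dots> \<le> (2 * y\<^sup>2)^l" using n y1 by (intro power_increasing) (use yy in \<open>auto simp: power2_eq_square one_le_power\<close>)
      finally have "y powr (- \<gamma>) * (1 + y\<^sup>2)^n \<le> 1 * (2 * y\<^sup>2)^l"
        using yg by (intro mult_mono) auto
      hence "Bc d n * (y powr (- \<gamma>) * (1 + y\<^sup>2)^n) \<le> Bc d n * (2 * y\<^sup>2)^l"
        by (intro mult_left_mono) (auto simp: Bc_nonneg)
      thus "\<bar>phi d n y\<bar> \<le> Bc d n * (2 * y\<^sup>2)^l" using phi_bound[OF y, of d n] unfolding \<gamma>_def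
        by (simp add: mult_ac)
    qed
    also have "\<dots> = B * (2^l * y^(2*l))" unfolding B_def by (simp add: sum_distrib_right power_mult_distrib power_mult)
    finally have s1: "(\<Sum>n\<le>l. \<bar>phi d n y\<bar>) \<le> B * (2^l * y^(2*l))" .
    have p1: "2^l * y^(2*l) \<ge> 1" using y1 mult_mono[of 1 "2^l" 1 "y^(2*l)"] one_le_power[of 2 l] one_le_power[of y "2*l"] by simp
    have s2: "exp (lm * s0) * \<bar>\<psi> y\<bar> \<le> exp (lm * s0) * (pi/2)" using \<psi>3 r3 by (intro mult_left_mono) auto
    have "\<bar>e y\<bar> \<le> B * (2^l * y^(2*l)) + exp (lm * s0) * (pi/2)" using ebase s1 s2 by linarith
    also have "\<dots> \<le> exp (lm * s0) * (B * (2^l * y^(2*l))) + exp (lm * s0) * ((pi/2) * (2^l * y^(2*l)))"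
    proof (rule add_mono)
      have "B * (2^l * y^(2*l)) \<ge> 0" using B0 by simp
      thus "B * (2^l * y^(2*l)) \<le> exp (lm * s0) * (B * (2^l * y^(2*l)))"
        using mult_right_mono[OF el, of "B * (2^l * y^(2*l))"] by simp
      have "pi/2 \<le> (pi/2) * (2^l * y^(2*l))" using mult_left_mono[OF p1, of "pi/2"] by simp
      thus "exp (lm * s0) * (pi/2) \<le> exp (lm * s0) * ((pi/2) * (2^l * y^(2*l)))" by simp
    qed
    also have "\<dots> = exp (lm * s0) * ((pi/2 + B) * 2^l) * y^(2*l)" by (simp add: algebra_simps)
    finally have eb: "\<bar>e y\<bar> \<le> exp (lm * s0) * ((pi/2 + B) * 2^l) * y^(2*l)" .
    have "(e y)\<^sup>2 \<le> (exp (lm * s0) * ((pi/2 + B) * 2^l) * y^(2*l))\<^sup>2"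
      using eb by (metis abs_ge_zero order_trans power2_abs power_mono)
    hence "(e y)\<^sup>2 * rho d y \<le> (exp (lm * s0) * ((pi/2 + B) * 2^l) * y^(2*l))\<^sup>2 * rho d y"
      using rho0 by (rule mult_right_mono)
    also have "\<dots> = exp (2 * lm * s0) * ((pi/2 + B) * 2^l)\<^sup>2 * (y^(4*l) * y^(d-1)) * (exp (- (y\<^sup>2)/8) * exp (- (y\<^sup>2)/8))"
      unfolding rho_def by (simp add: power_mult_distrib exp_add[symmetric] power_mult[symmetric] mult_ac exp_double[symmetric])
    also have "\<dots> \<le> exp (2 * lm * s0) * ((pi/2 + B) * 2^l)\<^sup>2 * (y^(4*l) * y^(d-1)) * (exp (- R\<^sup>2/8) * exp (- (y\<^sup>2)/8))"
    proof -
      have "R\<^sup>2 \<le> y\<^sup>2" using r3 R1 by (intro power_mono) auto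
      hence "exp (- (y\<^sup>2)/8) \<le> exp (- R\<^sup>2/8)" by simp
      thus ?thesis using y by (intro mult_left_mono mult_right_mono) auto
    qed
    also have "y^(4*l) * y^(d-1) = y powr real (4*l + d - 1)"
    proof -
      have "4*l + (d - 1) = 4*l + d - 1" using d by simp
      hence "y^(4*l) * y^(d-1) = y^(4*l + d - 1)" by (metis power_add)
      also have "\<dots> = y powr real (4*l + d - 1)" using y by (rule powr_realpow[symmetric])
      finally show ?thesis .
    qed
    finally have "(e y)\<^sup>2 * rho d y \<le> exp (2 * lm * s0) * exp (- R\<^sup>2 / 8) * ((pi/2 + B) * 2^l)\<^sup>2 * (y powr real (4*l + d - 1) * exp (-(1/8) * y\<^sup>2))"
      by (simp add: mult_ac)
    moreover have "indicator {..<\<delta>} y * (B * 2^l + CU)\<^sup>2 \<ge> 0" by simp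
    ultimately show ?thesis by linarith
  qed
qed



lemma amgm3:
  fixes a b r E :: real
  assumes E: "E > 0" and r: "r \<ge> 0"
  shows "\<bar>a * b * r\<bar> \<le> (a * a * r / E + E * (b * b * r)) / 2"
proof -
  have "0 \<le> (\<bar>a\<bar> - E * \<bar>b\<bar>)\<^sup>2" by simp
  hence "2 * E * (\<bar>a\<bar> * \<bar>b\<bar>) \<le> a * a + E * E * (b * b)"
    by (simp add: power2_eq_square algebra_simps abs_mult_self_eq)
  hence "2 * \<bar>a\<bar> * \<bar>b\<bar> \<le> a * a / E + E * (b * b)" using E
    by (simp add: field_simps)
  hence "2 * \<bar>a\<bar> * \<bar>b\<bar> * r \<le> (a * a / E + E * (b * b)) * r" using r by (rule mult_right_mono)
  thus ?thesis using r E by (simp add: abs_mult field_simps)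
qed

lemma sqrt_exp: "sqrt (exp x) = exp (x / 2)"
proof -
  have "exp (x/2) ^ 2 = exp x" by (simp add: exp_double[symmetric] power2_eq_square exp_add[symmetric])
  thus ?thesis by (metis exp_ge_zero real_sqrt_abs abs_of_nonneg)
qed

lemma eventually_tail:
  fixes lm c \<sigma> :: real
  assumes "lm > 0" "c > 0" "\<sigma> > 0"
  shows "eventually (\<lambda>x. exp (2 * lm * x) * exp (- (exp (\<sigma> * x))\<^sup>2 / 8) \<le> exp (- (c * x))) at_top"
proof -
  have K: "2 * lm + c > 0" using assms by simp
  have "eventually (\<lambda>x. (2 * lm + c) * x \<le> exp (2 * \<sigma> * x) / 8) at_top"
    using K assms(3) by real_asymp
  thus ?thesis
  proof eventually_elim
    case (elim x)
    have "(exp (\<sigma> * x))\<^sup>2 = exp (2 * \<sigma> * x)" by (simp add: power2_eq_square exp_add[symmetric])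
    hence "exp (2 * lm * x) * exp (- (exp (\<sigma> * x))\<^sup>2 / 8) = exp (2 * lm * x + - (exp (2 * \<sigma> * x) / 8))"
      by (simp only: exp_add minus_divide_left)
    also have "\<dots> \<le> exp (- (c * x))" using elim by (simp add: algebra_simps)
    finally show ?case .
  qed
qed



theorem lemma5p1:
  fixes d l :: nat and \<alpha> kt \<sigma>t :: real and U :: "real \<Rightarrow> real"
  assumes "d \<ge> 7" and "l \<ge> 1" and "lam d l > 0" and "\<alpha> > 0"
    and "0 < kt" and "kt < 1" and "0 < \<sigma>t" and "\<sigma>t < 1/2"
    and U_sol: "solves_U d \<alpha> U"
    and U_mono: "strict_mono_on {0<..} U"
    and U_asymp: "\<exists>c>0. (\<lambda>r. U r - (pi/2 - c * r powr (- gamma d)))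
                          \<in> O[at_top](\<lambda>r. r powr (- gamma d - 2))"
  shows "\<exists>\<kappa>>0. \<exists>C>0. \<exists>sstar>0. \<forall>s0\<ge>sstar. \<forall>q :: nat \<Rightarrow> real. \<forall>\<psi> :: real \<Rightarrow> real.
    let \<omega>l = lam d l / gamma d;
        K = exp (kt * \<omega>l * s0);
        \<phi>t = (\<lambda>y. exp (lam d l * s0) * ((\<Sum>n<l. q n * phi d n y) - \<psi> y))
    in (sqrt (\<Sum>n<l. (q n)\<^sup>2) \<le> exp (- lam d l * s0) \<and>
        set_borel_measurable lborel {0<..} \<psi> \<and>
        (\<forall>y. 0 < y \<and> y < K * exp (- \<omega>l * s0) \<longrightarrow>
              \<psi> y = U (y * exp (\<omega>l * s0)) - pi/2) \<and>
        (\<forall>y. K * exp (- \<omega>l * s0) \<le> y \<and> y < exp (\<sigma>t * s0) \<longrightarrow>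
              \<psi> y = (\<Sum>n<l. q n * phi d n y) - exp (- lam d l * s0) * phi d l y) \<and>
        (\<forall>y. exp (\<sigma>t * s0) \<le> y \<longrightarrow> \<bar>\<psi> y\<bar> \<le> pi/2))
       \<longrightarrow> in_H d \<phi>t \<and>
           hnorm d (\<lambda>y. \<phi>t y - phi d l y) \<le> C * exp (- \<kappa> * s0) \<and>
           (\<forall>n. n \<noteq> l \<longrightarrow> \<bar>hinner d \<phi>t (phi d n)\<bar> \<le> C * exp (- \<kappa> * s0))"
proof -
  have d: "d \<ge> 7" and lmp: "lam d l > 0" and kt: "0 < kt" "kt < 1" and \<sigma>t: "0 < \<sigma>t"
    using assms by auto
  have gam: "gamma d > 1" by (rule gamma_gt1[OF d])
  have \<omega>lp: "lam d l / gamma d > 0" using lmp gam by simp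
  obtain CU where CU: "CU > 0" "\<And>r. r > 0 \<Longrightarrow> \<bar>U r - pi/2\<bar> \<le> CU * r powr (- gamma d)"
    using U_bound[OF U_sol _ U_asymp] gam by auto
  define B where "B = (\<Sum>n\<le>l. Bc d n)"
  have B0: "B \<ge> 0" unfolding B_def by (intro sum_nonneg) (simp add: Bc_nonneg)
  define A where "A = B * 2^l + CU"
  define A3 where "A3 = (pi/2 + B) * 2^l"
  define p3 where "p3 = real (4*l + d - 1)"
  define M3 where "M3 = Gamma ((p3+1)/2) / (2 * (1/8) powr ((p3+1)/2))"
  have M3hbi: "has_bochner_integral lborel (\<lambda>y. indicator {0<..} y * (y powr p3 * exp (-(1/8)*y\<^sup>2))) M3"
    unfolding M3_def by (rule moment_hbi) (auto simp: p3_def)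
  have M30: "M3 \<ge> 0" unfolding M3_def p3_def by (intro divide_nonneg_pos Gamma_real_nonneg) auto
  define C2 where "C2 = A\<^sup>2 + A3\<^sup>2 * M3 + 1"
  have C2: "C2 > 0" unfolding C2_def using M30 by (simp add: add_nonneg_pos)
  define C where "C = sqrt C2"
  have Cp: "C > 0" unfolding C_def using C2 by simp
  define \<kappa> where "\<kappa> = (1 - kt) * (lam d l / gamma d) / 2"
  have \<kappa>p: "\<kappa> > 0" unfolding \<kappa>_def using kt \<omega>lp lmp gam by (intro divide_pos_pos mult_pos_pos) auto
  have cpos: "(1 - kt) * (lam d l / gamma d) > 0" using kt \<omega>lp by (intro mult_pos_pos) auto
  obtain s1 where s1: "\<And>s. s \<ge> s1 \<Longrightarrow>
      exp (2 * lam d l * s) * exp (- (exp (\<sigma>t * s))\<^sup>2 / 8) \<le> exp (- ((1 - kt) * (lam d l / gamma d) * s))"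
    using eventually_tail[OF lmp cpos \<sigma>t] unfolding eventually_at_top_linorder by blast
  define sstar where "sstar = max s1 1"
  have sp: "sstar > 0" unfolding sstar_def by simp
  show ?thesis
    unfolding Let_def
  proof (rule exI[of _ \<kappa>], rule conjI[OF \<kappa>p], rule exI[of _ C], rule conjI[OF Cp], rule exI[of _ sstar], rule conjI[OF sp], intro allI impI, goal_cases)
    case (1 s0 q \<psi>)
    have s0: "s0 \<ge> sstar" using 1 by simp
    have s0p: "s0 > 0" "s0 \<ge> s1" using s0 by (auto simp: sstar_def)
    define \<delta> where "\<delta> = exp (kt * (lam d l / gamma d) * s0) * exp (- (lam d l / gamma d) * s0)"
    define R where "R = exp (\<sigma>t * s0)"
    have \<delta>eq: "\<delta> = exp (- ((1 - kt) * (lam d l / gamma d) * s0))"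
      unfolding \<delta>_def using gam by (simp add: exp_add[symmetric] field_simps)
    have \<delta>0: "\<delta> > 0" unfolding \<delta>eq by simp
    have hq: "sqrt (\<Sum>n<l. (q n)\<^sup>2) \<le> exp (- lam d l * s0)" using 1 by blast
    have h\<psi>m: "set_borel_measurable lborel {0<..} \<psi>" using 1 by blast
    have h\<psi>1: "\<forall>y. 0 < y \<and> y < \<delta> \<longrightarrow> \<psi> y = U (y * exp ((lam d l / gamma d) * s0)) - pi/2"
      using 1 unfolding \<delta>_def by blast
    have h\<psi>2: "\<forall>y. \<delta> \<le> y \<and> y < R \<longrightarrow> \<psi> y = (\<Sum>n<l. q n * phi d n y) - exp (- lam d l * s0) * phi d l y"
      using 1 unfolding \<delta>_def R_def by blast
    have h\<psi>3: "\<forall>y. R \<le> y \<longrightarrow> \<bar>\<psi> y\<bar> \<le> pi/2" using 1 unfolding R_def by blast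
    have qb: "\<bar>q n\<bar> \<le> exp (- lam d l * s0)" if n: "n < l" for n
    proof -
      have "\<bar>q n\<bar> = sqrt ((q n)\<^sup>2)" by simp
      also have "\<dots> \<le> sqrt (\<Sum>n<l. (q n)\<^sup>2)"
        using n by (intro real_sqrt_le_mono member_le_sum) auto
      finally show ?thesis using hq by linarith
    qed
    define e where "e = (\<lambda>y. exp (lam d l * s0) * ((\<Sum>n<l. q n * phi d n y) - \<psi> y) - phi d l y)"
    define K3 where "K3 = exp (2 * lam d l * s0) * exp (- R\<^sup>2 / 8) * A3\<^sup>2"
    have pw: "(e y)\<^sup>2 * rho d y \<le> indicator {..<\<delta>} y * A\<^sup>2 + K3 * (y powr p3 * exp (-(1/8) * y\<^sup>2))"
      if y: "y > 0" for y
      using e_pointwise[of d l s0 kt \<sigma>t CU U q \<psi> y, OF d lmp s0p(1) kt(2) \<sigma>t CU(1) CU(2) qb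
          h\<psi>1[unfolded \<delta>_def] h\<psi>2[unfolded \<delta>_def R_def] h\<psi>3[unfolded R_def] y]
      unfolding e_def K3_def A_def A3_def B_def p3_def \<delta>_def R_def by simp
    have ex: "exp (2 * lam d l * s0) * exp (- R\<^sup>2 / 8) \<le> \<delta>"
      using s1[OF s0p(2)] unfolding R_def \<delta>eq .
    have K3le: "K3 \<le> A3\<^sup>2 * \<delta>" unfolding K3_def
      using mult_right_mono[OF ex, of "A3\<^sup>2"] by (simp add: mult_ac)
    have \<psi>I[measurable]: "(\<lambda>y. indicator {0<..} y * \<psi> y) \<in> borel_measurable lborel"
      using h\<psi>m unfolding set_borel_measurable_def by simp
    define eI where "eI y = indicator {0<..} y * e y" for y
    have eIeq: "eI = (\<lambda>y. exp (lam d l * s0) * (indicator {0<..} y * (\<Sum>n<l. q n * phi d n y) - indicator {0<..} y * \<psi> y) - indicator {0<..} y * phi d l y)"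
      unfolding eI_def e_def by (auto simp: fun_eq_iff algebra_simps)
    have eIm[measurable]: "eI \<in> borel_measurable lborel"
      unfolding eIeq by measurable
    define f2 where "f2 y = indicator {0<..} y * (e y * e y * rho d y)" for y
    have f2eq: "f2 = (\<lambda>y. eI y * eI y * rho d y)" by (auto simp: fun_eq_iff f2_def eI_def indicator_def)
    have f2m: "f2 \<in> borel_measurable lborel" unfolding f2eq rho_def by measurable
    define G where "G y = A\<^sup>2 * indicator {0<..<\<delta>} y + K3 * (indicator {0<..} y * (y powr p3 * exp (-(1/8)*y\<^sup>2)))" for y
    have Ghbi: "has_bochner_integral lborel G (A\<^sup>2 * \<delta> + K3 * M3)"
    proof -
      have "has_bochner_integral lborel (indicator {0<..<\<delta>}) (measure lborel {0<..<\<delta>})"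
        by (rule has_bochner_integral_real_indicator) (use \<delta>0 in auto)
      hence i1: "has_bochner_integral lborel (indicator {0<..<\<delta>}) \<delta>" using \<delta>0 by simp
      show ?thesis unfolding G_def
        by (intro has_bochner_integral_add has_bochner_integral_mult_right i1 M3hbi)
    qed
    have f20: "f2 y \<ge> 0" for y unfolding f2_def rho_def by (auto simp: indicator_def)
    have f2G: "f2 y \<le> G y" for y
    proof (cases "y > 0")
      case True
      have ii: "indicator {..<\<delta>} y = (indicator {0<..<\<delta>} y :: real)" using True by (simp add: indicator_def)
      have "f2 y = (e y)\<^sup>2 * rho d y" unfolding f2_def using True by (simp add: power2_eq_square)
      also have "\<dots> \<le> indicator {..<\<delta>} y * A\<^sup>2 + K3 * (y powr p3 * exp (-(1/8) * y\<^sup>2))" by (rule pw[OF True])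
      also have "\<dots> = G y" unfolding G_def ii using True by simp
      finally show ?thesis .
    next
      case False then show ?thesis unfolding f2_def G_def by (simp add: indicator_def)
    qed
    have Gi: "integrable lborel G" "integral\<^sup>L lborel G = A\<^sup>2 * \<delta> + K3 * M3"
      using Ghbi unfolding has_bochner_integral_iff by auto
    have f2int: "integrable lborel f2"
      by (rule Bochner_Integration.integrable_bound[OF Gi(1) f2m]) (use f2G f20 in \<open>auto intro!: AE_I2 simp: abs_of_nonneg intro: order_trans[OF _ abs_ge_self]\<close>)
    have I2le: "integral\<^sup>L lborel f2 \<le> C2 * \<delta>"
    proof -
      have "integral\<^sup>L lborel f2 \<le> integral\<^sup>L lborel G" by (rule integral_mono[OF f2int Gi(1) f2G])
      also have "\<dots> \<le> A\<^sup>2 * \<delta> + A3\<^sup>2 * \<delta> * M3" unfolding Gi(2) using K3le M30 by (intro add_left_mono mult_right_mono) auto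
      also have "\<dots> \<le> C2 * \<delta>" unfolding C2_def using \<delta>0 by (simp add: algebra_simps)
      finally show ?thesis .
    qed
    define E where "E = C * exp (- \<kappa> * s0)"
    have Ep: "E > 0" unfolding E_def using Cp by simp
    have E2: "E\<^sup>2 = C2 * \<delta>"
    proof -
      have "(exp (- \<kappa> * s0))\<^sup>2 = \<delta>" unfolding \<delta>eq \<kappa>_def
        using gam by (simp add: power2_eq_square exp_add[symmetric] field_simps)
      moreover have "C\<^sup>2 = C2" unfolding C_def using C2 by simp
      ultimately show ?thesis unfolding E_def by (simp add: power_mult_distrib)
    qed
    have hee: "hinner d e e = integral\<^sup>L lborel f2" unfolding hinner_alt f2_def ..
    have hn: "hnorm d e \<le> E"
    proof -
      have "hnorm d e = sqrt (integral\<^sup>L lborel f2)" unfolding hnorm_def hee ..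
      also have "\<dots> \<le> sqrt (E\<^sup>2)" using I2le E2 by (intro real_sqrt_le_mono) simp
      also have "\<dots> = E" using Ep by simp
      finally show ?thesis .
    qed
    define \<phi>t where "\<phi>t = (\<lambda>y. exp (lam d l * s0) * ((\<Sum>n<l. q n * phi d n y) - \<psi> y))"
    have \<phi>te: "\<phi>t y = e y + phi d l y" for y unfolding \<phi>t_def e_def by simp
    have P_int: "integrable lborel (\<lambda>y. indicator {0<..} y * (phi d n y * phi d n y * rho d y))" for n
      by (rule phi_int(1)[OF d])
    have P_le: "integral\<^sup>L lborel (\<lambda>y. indicator {0<..} y * (phi d n y * phi d n y * rho d y)) \<le> 1" for n
      using phi_norm_le1[OF d, of n] unfolding hinner_alt .
    have inH: "in_H d \<phi>t"
    proof -
      have mI[measurable]: "(\<lambda>y. indicator {0<..} y * \<phi>t y) \<in> borel_measurable lborel"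
      proof -
        have "(\<lambda>y. indicator {0<..} y * \<phi>t y) = (\<lambda>y. eI y + indicator {0<..} y * phi d l y)"
          by (auto simp: fun_eq_iff \<phi>te eI_def algebra_simps)
        also have "\<dots> \<in> borel_measurable lborel" by measurable
        finally show ?thesis .
      qed
      define h where "h y = indicator {0<..} y * ((\<phi>t y)\<^sup>2 * rho d y)" for y
      have hm: "h \<in> borel_measurable lborel"
      proof -
        have "h = (\<lambda>y. (indicator {0<..} y * \<phi>t y)\<^sup>2 * rho d y)"
          by (auto simp: fun_eq_iff h_def indicator_def)
        also have "\<dots> \<in> borel_measurable lborel" unfolding rho_def by measurable
        finally show ?thesis .
      qed
      have h0: "h y \<ge> 0" for y unfolding h_def rho_def by (auto simp: indicator_def)
      have hb: "h y \<le> 2 * f2 y + 2 * (indicator {0<..} y * (phi d l y * phi d l y * rho d y))" for y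
      proof (cases "y > 0")
        case True
        have r0: "rho d y \<ge> 0" unfolding rho_def using True by simp
        have sq: "(a + b)\<^sup>2 \<le> 2 * (a * a) + 2 * (b * b)" for a b :: real
          using sum_squares_bound[of a b] by (simp add: power2_eq_square algebra_simps)
        have "(\<phi>t y)\<^sup>2 * rho d y \<le> (2 * (e y * e y) + 2 * (phi d l y * phi d l y)) * rho d y"
          unfolding \<phi>te using sq r0 by (rule mult_right_mono)
        then show ?thesis unfolding h_def f2_def using True by (simp add: algebra_simps)
      next
        case False then show ?thesis unfolding h_def f2_def by (simp add: indicator_def)
      qed
      have hint: "integrable lborel h"
      proof (rule Bochner_Integration.integrable_bound[OF _ hm])
        show "integrable lborel (\<lambda>y. 2 * f2 y + 2 * (indicator {0<..} y * (phi d l y * phi d l y * rho d y)))"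
          using f2int P_int[of l] by auto
        show "AE x in lborel. norm (h x) \<le> norm (2 * f2 x + 2 * (indicator {0<..} x * (phi d l x * phi d l x * rho d x)))"
          using hb h0 by (auto intro!: AE_I2 intro: order_trans[OF _ abs_ge_self])
      qed
      have "(\<integral>\<^sup>+y. ennreal (norm (h y)) \<partial>lborel) < \<infinity>" using hint unfolding integrable_iff_bounded by simp
      moreover have "(\<integral>\<^sup>+y. indicator {0<..} y * ennreal ((\<phi>t y)\<^sup>2 * rho d y) \<partial>lborel) = (\<integral>\<^sup>+y. ennreal (norm (h y)) \<partial>lborel)"
        by (rule nn_integral_cong) (auto simp: h_def indicator_def abs_of_nonneg rho_def)
      moreover have "set_borel_measurable lborel {0<..} \<phi>t" unfolding set_borel_measurable_def using mI by simp
      ultimately show ?thesis unfolding in_H_def by simp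
    qed
    have cross: "\<bar>hinner d \<phi>t (phi d n)\<bar> \<le> E" if nl: "n \<noteq> l" for n
    proof -
      define Q where "Q y = indicator {0<..} y * (e y * phi d n y * rho d y)" for y
      have Qm: "Q \<in> borel_measurable lborel"
      proof -
        have "Q = (\<lambda>y. eI y * phi d n y * rho d y)" by (auto simp: fun_eq_iff Q_def eI_def)
        also have "\<dots> \<in> borel_measurable lborel" unfolding rho_def by measurable
        finally show ?thesis .
      qed
      define P where "P y = indicator {0<..} y * (phi d n y * phi d n y * rho d y)" for y
      have Qb: "\<bar>Q y\<bar> \<le> (f2 y / E + E * P y) / 2" for y
      proof (cases "y > 0")
        case True
        have r0: "rho d y \<ge> 0" unfolding rho_def using True by simp
        show ?thesis unfolding Q_def f2_def P_def using True amgm3[OF Ep r0, of "e y" "phi d n y"] by simp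
      next
        case False then show ?thesis unfolding Q_def f2_def P_def by (simp add: indicator_def)
      qed
      have bint: "integrable lborel (\<lambda>y. (f2 y / E + E * P y) / 2)"
        using f2int P_int[of n] unfolding P_def by auto
      have Qint: "integrable lborel Q"
        by (rule Bochner_Integration.integrable_bound[OF bint Qm]) (use Qb in \<open>auto intro!: AE_I2 intro: order_trans[OF _ abs_ge_self]\<close>)
      have "\<bar>integral\<^sup>L lborel Q\<bar> \<le> integral\<^sup>L lborel (\<lambda>y. (f2 y / E + E * P y) / 2)"
        by (rule integral_abs_bound_integral[OF Qint bint Qb])
      also have "\<dots> = (integral\<^sup>L lborel f2 / E + E * integral\<^sup>L lborel P) / 2"
        using f2int P_int[of n] unfolding P_def by simp
      also have "\<dots> \<le> (E\<^sup>2 / E + E * 1) / 2"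
        using I2le E2 P_le[of n] Ep unfolding P_def
        by (intro divide_right_mono add_mono divide_right_mono mult_left_mono) auto
      also have "\<dots> = E" using Ep by (simp add: power2_eq_square)
      finally have Qbd: "\<bar>integral\<^sup>L lborel Q\<bar> \<le> E" .
      have "hinner d \<phi>t (phi d n) = integral\<^sup>L lborel (\<lambda>y. Q y + indicator {0<..} y * (phi d l y * phi d n y * rho d y))"
        unfolding hinner_alt Q_def by (rule arg_cong[where f="integral\<^sup>L lborel"]) (auto simp: fun_eq_iff \<phi>te algebra_simps)
      also have "\<dots> = integral\<^sup>L lborel Q + hinner d (phi d l) (phi d n)"
        unfolding hinner_alt using Qint phi_int(1)[OF d, of l n] by simp
      also have "hinner d (phi d l) (phi d n) = 0" using phi_orth[OF d] nl by simp
      finally show ?thesis using Qbd by simp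
    qed
    have hn': "hnorm d (\<lambda>y. \<phi>t y - phi d l y) \<le> E"
    proof -
      have "(\<lambda>y. \<phi>t y - phi d l y) = e" unfolding \<phi>t_def e_def by simp
      thus ?thesis using hn by simp
    qed
    show ?case using inH hn' cross unfolding \<phi>t_def E_def by blast
  qed
qed


end
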